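(* For every sufficiently small $\epsilon>0$ there is a set of $2^{\Omega(\epsilon^{-1/2})}$ distributions supported on $[0,1]$, each having a non-decreasing PDF, such that every two distinct distributions in the set are at Lévy distance $\Omega(\epsilon)$ from each other.
   Context: Lévy distance: $\mathrm{L\acute{e}vy}(F,G)=\inf\{\epsilon: F(v-\epsilon)-\epsilon\le G(v)\le F(v+\epsilon)+\epsilon\ \forall v\}$. (Distributions with non-decreasing PDF are regular, i.e. $qF^{-1}(1-q)$ is concave.) *)

theory Defs
  imports "HOL-Probability.Probability"
begin

definition levy_dist :: "(real \<Rightarrow> real) \<Rightarrow> (real \<Rightarrow> real) \<Rightarrow> real" where
  "levy_dist F G = Inf {e. e \<ge> 0 \<and>
     (\<forall>v. F (v - e) - e \<le> G v \<and> G v \<le> F (v + e) + e)}"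

definition nondec_pdf_dist01 :: "real measure \<Rightarrow> bool" where
  "nondec_pdf_dist01 M \<longleftrightarrow> prob_space M \<and>
     (\<exists>f :: real \<Rightarrow> real. (\<forall>x. 0 \<le> f x) \<and> (\<forall>x. x \<notin> {0..1} \<longrightarrow> f x = 0) \<and>
        mono_on {0..1} f \<and> M = density lborel (\<lambda>x. ennreal (f x)))"

end

theory Submission
  imports Defs
begin

definition sB :: "nat set \<Rightarrow> nat \<Rightarrow> real" where
  "sB B m = (if m div 2 \<in> B then (if even m then 1 else -1) else 0)"

definition wB :: "nat \<Rightarrow> nat set \<Rightarrow> nat \<Rightarrow> real" where
  "wB n B m = (2 * real m + 1 + sB B m) / real (2*n)"

definition Iv :: "nat \<Rightarrow> nat \<Rightarrow> real set" where
  "Iv n m = {real m / real (2*n) <.. real (Suc m) / real (2*n)}"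

definition fB :: "nat \<Rightarrow> nat set \<Rightarrow> real \<Rightarrow> real" where
  "fB n B x = (\<Sum>m<2*n. wB n B m * indicator (Iv n m) x)"

definition MB :: "nat \<Rightarrow> nat set \<Rightarrow> real measure" where
  "MB n B = density lborel (\<lambda>x. ennreal (fB n B x))"

definition FB :: "nat \<Rightarrow> nat set \<Rightarrow> real \<Rightarrow> real" where
  "FB n B x = (\<Sum>m<2*n. wB n B m * max 0 (min (real (Suc m) / real (2*n)) x - real m / real (2*n)))"

lemma sB_bounds: "-1 \<le> sB B m" "sB B m \<le> 1"
  by (auto simp: sB_def)

lemma wB_nonneg: "n > 0 \<Longrightarrow> 0 \<le> wB n B m"
  using sB_bounds[of B m] by (auto simp: wB_def intro!: divide_nonneg_pos)

lemma wB_lower: "n > 0 \<Longrightarrow> 2 * real m / real (2*n) \<le> wB n B m"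
  unfolding wB_def by (rule divide_right_mono) (use sB_bounds[of B m] in auto)

lemma wB_upper: "n > 0 \<Longrightarrow> wB n B m \<le> (2 * real m + 2) / real (2*n)"
  unfolding wB_def by (rule divide_right_mono) (use sB_bounds[of B m] in auto)

lemma wB_mono: assumes "n > 0" "m1 \<le> m2" shows "wB n B m1 \<le> wB n B m2"
proof (cases "m1 = m2")
  case False
  then have "m1 + 1 \<le> m2" using assms by auto
  then have "(2 * real m1 + 2) / real (2*n) \<le> 2 * real m2 / real (2*n)"
    by (intro divide_right_mono) auto
  then show ?thesis using wB_lower[OF assms(1), of m2 B] wB_upper[OF assms(1), of B m1] by linarith
qed simp

lemma wB_le2: assumes "n > 0" "m < 2*n" shows "wB n B m \<le> 2"
proof -
  have "(2 * real m + 2) / real (2*n) \<le> 2"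
    using assms by (auto simp add: divide_simps)
  then show ?thesis using wB_upper[OF assms(1), of B m] by linarith
qed

lemma fB_on: assumes "n > 0" "m < 2*n" "x \<in> Iv n m" shows "fB n B x = wB n B m"
proof -
  have "fB n B x = (\<Sum>m'<2*n. if m' = m then wB n B m else 0)"
    unfolding fB_def
  proof (rule sum.cong[OF refl])
    fix m' assume "m' \<in> {..<2*n}"
    show "wB n B m' * indicator (Iv n m') x = (if m' = m then wB n B m else 0)"
    proof (cases "m' = m")
      case False
      have "x \<notin> Iv n m'"
      proof (cases "m' < m")
        case True
        then have "real (Suc m') / real (2*n) \<le> real m / real (2*n)"
          by (intro divide_right_mono) auto
        then show ?thesis using assms(3) by (auto simp: Iv_def)
      next
        case f: False
        with False have "Suc m \<le> m'" by auto
        then have "real (Suc m) / real (2*n) \<le> real m' / real (2*n)"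
          by (intro divide_right_mono) auto
        then show ?thesis using assms(3) by (auto simp: Iv_def)
      qed
      then show ?thesis using False by simp
    qed (use assms in simp)
  qed
  also have "\<dots> = wB n B m" using assms by simp
  finally show ?thesis .
qed

lemma fB_out: assumes "n > 0" "x \<le> 0 \<or> x > 1" shows "fB n B x = 0"
  unfolding fB_def
proof (rule sum.neutral, rule ballI)
  fix m assume m: "m \<in> {..<2*n}"
  have "x \<notin> Iv n m"
  proof (cases "x \<le> 0")
    case True
    have "0 \<le> real m / real (2*n)" by simp
    then show ?thesis unfolding Iv_def using True by (simp only: greaterThanAtMost_iff) linarith
  next
    case False
    then have "x > 1" using assms by auto
    have "real (Suc m) / real (2*n) \<le> 1" using m assms by (simp add: divide_simps)
    then show ?thesis using \<open>x > 1\<close> by (auto simp: Iv_def)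
  qed
  then show "wB n B m * indicator (Iv n m) x = 0" by simp
qed

lemma fB_nonneg: "n > 0 \<Longrightarrow> 0 \<le> fB n B x"
  unfolding fB_def using wB_nonneg by (auto intro!: sum_nonneg)

lemma exists_Iv: assumes "n > 0" "0 < x" "x \<le> 1" shows "\<exists>m<2*n. x \<in> Iv n m"
proof -
  define r where "r = real (2*n)"
  have r: "r > 0" using assms by (simp add: r_def)
  define c where "c = \<lceil>r * x\<rceil>"
  have c1: "c \<ge> 1" using r assms by (simp add: c_def)
  have c2: "c \<le> int (2*n)" using r assms unfolding c_def r_def
    by (simp add: ceiling_le_iff)
  have c3: "c - 1 < r * x" "r * x \<le> c" unfolding c_def by linarith+
  define m where "m = nat (c - 1)"
  have rm: "real m = c - 1" using c1 by (simp add: m_def)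
  have "m < 2*n" using c2 c1 unfolding m_def by linarith
  moreover have "x \<in> Iv n m"
    unfolding Iv_def r_def[symmetric] using c3 rm r
    by (auto simp: divide_simps mult.commute)
  ultimately show ?thesis by blast
qed

lemma fB_mono: assumes "n > 0" shows "mono_on {0..1} (fB n B)"
proof (rule mono_onI)
  fix x y :: real assume xy: "x \<in> {0..1}" "y \<in> {0..1}" "x \<le> y"
  show "fB n B x \<le> fB n B y"
  proof (cases "x = 0")
    case True
    then show ?thesis using fB_out[OF assms, of x B] fB_nonneg[OF assms, of B y] by simp
  next
    case False
    then obtain m1 where m1: "m1 < 2*n" "x \<in> Iv n m1" using exists_Iv[OF assms, of x] xy by auto
    obtain m2 where m2: "m2 < 2*n" "y \<in> Iv n m2" using exists_Iv[OF assms, of y] xy False by auto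
    have "m1 \<le> m2"
    proof (rule ccontr)
      assume "\<not> m1 \<le> m2"
      then have "Suc m2 \<le> m1" by simp
      then have "real (Suc m2) / real (2*n) \<le> real m1 / real (2*n)"
        by (intro divide_right_mono) auto
      then show False using m1 m2 xy by (auto simp: Iv_def)
    qed
    then show ?thesis using fB_on[OF assms m1] fB_on[OF assms m2] wB_mono[OF assms] by simp
  qed
qed

lemma fB_meas: "fB n B \<in> borel_measurable borel"
  unfolding fB_def Iv_def by measurable

lemma fB_meas_lb: "(\<lambda>x. ennreal (fB n B x)) \<in> borel_measurable lborel"
  unfolding fB_def Iv_def by measurable

lemma MB_emeasure: assumes "n > 0" "A \<in> sets borel"
  shows "emeasure (MB n B) A = (\<Sum>m<2*n. ennreal (wB n B m) * emeasure lborel (Iv n m \<inter> A))"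
proof -
  have "emeasure (MB n B) A = (\<integral>\<^sup>+ x. ennreal (fB n B x) * indicator A x \<partial>lborel)"
    unfolding MB_def by (rule emeasure_density) (use fB_meas_lb assms in auto)
  also have "\<dots> = (\<integral>\<^sup>+ x. (\<Sum>m<2*n. ennreal (wB n B m) * indicator (Iv n m \<inter> A) x) \<partial>lborel)"
  proof (rule nn_integral_cong)
    fix x
    show "ennreal (fB n B x) * indicator A x = (\<Sum>m<2*n. ennreal (wB n B m) * indicator (Iv n m \<inter> A) x)"
    proof (cases "x \<in> A")
      case True
      have "ennreal (fB n B x) = (\<Sum>m<2*n. ennreal (wB n B m * indicator (Iv n m) x))"
        unfolding fB_def using wB_nonneg[OF assms(1)]
        by (subst sum_ennreal) auto
      also have "\<dots> = (\<Sum>m<2*n. ennreal (wB n B m) * indicator (Iv n m \<inter> A) x)"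
        using True by (intro sum.cong) (auto simp: indicator_def)
      finally show ?thesis using True by simp
    qed simp
  qed
  also have "\<dots> = (\<Sum>m<2*n. \<integral>\<^sup>+ x. ennreal (wB n B m) * indicator (Iv n m \<inter> A) x \<partial>lborel)"
    using assms by (intro nn_integral_sum) (auto simp: Iv_def)
  also have "\<dots> = (\<Sum>m<2*n. ennreal (wB n B m) * emeasure lborel (Iv n m \<inter> A))"
    using assms by (intro sum.cong refl nn_integral_cmult_indicator) (auto simp: Iv_def)
  finally show ?thesis .
qed

lemma Iv_Iic: "emeasure lborel (Iv n m \<inter> {..x}) =
   ennreal (max 0 (min (real (Suc m) / real (2*n)) x - real m / real (2*n)))"
proof -
  let ?a = "real m / real (2*n)" and ?b = "real (Suc m) / real (2*n)"
  have e: "Iv n m \<inter> {..x} = {?a <.. min ?b x}" by (auto simp: Iv_def)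
  show ?thesis
  proof (cases "?a \<le> min ?b x")
    case True
    have "emeasure lborel {?a<..min ?b x} = ennreal (min ?b x - ?a)"
      by (rule emeasure_lborel_Ioc[OF True])
    then show ?thesis unfolding e using True by simp
  next
    case False
    then have em: "{?a <.. min ?b x} = {}" by auto
    have mx: "max 0 (min ?b x - ?a) = 0" using False by auto
    show ?thesis unfolding e em mx by simp
  qed
qed

lemma FB_nonneg: "n > 0 \<Longrightarrow> 0 \<le> FB n B x"
  unfolding FB_def using wB_nonneg by (auto intro!: sum_nonneg)

lemma MB_Iic: assumes "n > 0" shows "emeasure (MB n B) {..x} = ennreal (FB n B x)"
proof -
  have "emeasure (MB n B) {..x} = (\<Sum>m<2*n. ennreal (wB n B m) * emeasure lborel (Iv n m \<inter> {..x}))"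
    using MB_emeasure[OF assms] by simp
  also have "\<dots> = (\<Sum>m<2*n. ennreal (wB n B m * max 0 (min (real (Suc m) / real (2*n)) x - real m / real (2*n))))"
    unfolding Iv_Iic using wB_nonneg[OF assms] by (intro sum.cong refl) (simp add: ennreal_mult)
  also have "\<dots> = ennreal (FB n B x)"
    unfolding FB_def using wB_nonneg[OF assms] by (subst sum_ennreal) auto
  finally show ?thesis .
qed

lemma cdf_MB: assumes "n > 0" shows "cdf (MB n B) = FB n B"
proof
  fix x show "cdf (MB n B) x = FB n B x"
    unfolding cdf_def2 measure_def MB_Iic[OF assms] using FB_nonneg[OF assms] by simp
qed

lemma sum_odd: "(\<Sum>m<K. 2 * real m + 1) = real K ^ 2"
  by (induction K) (auto simp: power2_eq_square algebra_simps)

lemma sum_s: "(\<Sum>m<2*j. sB B m) = 0"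
proof (induction j)
  case (Suc j)
  have e: "2 * Suc j = Suc (Suc (2*j))" by simp
  have "sB B (2*j) + sB B (Suc (2*j)) = 0" by (simp add: sB_def)
  then show ?case unfolding e by (simp add: Suc)
qed simp

lemma sum_w: assumes "n > 0" shows "(\<Sum>m<2*n. wB n B m) = real (2*n)"
proof -
  have "(\<Sum>m<2*n. wB n B m) = ((\<Sum>m<2*n. 2 * real m + 1) + (\<Sum>m<2*n. sB B m)) / real (2*n)"
    unfolding wB_def by (simp add: sum_divide_distrib[symmetric] sum.distrib)
  also have "\<dots> = real (2*n)" unfolding sum_odd sum_s using assms by (simp add: power2_eq_square)
  finally show ?thesis .
qed

lemma MB_prob: assumes "n > 0" shows "prob_space (MB n B)"
proof
  have "emeasure (MB n B) (space (MB n B)) = emeasure (MB n B) UNIV" by (simp add: MB_def)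
  also have "\<dots> = (\<Sum>m<2*n. ennreal (wB n B m) * emeasure lborel (Iv n m))"
    using MB_emeasure[OF assms, of UNIV] by simp
  also have "\<dots> = (\<Sum>m<2*n. ennreal (wB n B m * (1 / real (2*n))))"
  proof (intro sum.cong refl)
    fix m
    have "emeasure lborel (Iv n m) = ennreal (real (Suc m) / real (2*n) - real m / real (2*n))"
      unfolding Iv_def using assms by (intro emeasure_lborel_Ioc) (simp add: divide_right_mono)
    also have "\<dots> = ennreal (1 / real (2*n))" by (simp add: diff_divide_distrib[symmetric])
    finally show "ennreal (wB n B m) * emeasure lborel (Iv n m) = ennreal (wB n B m * (1 / real (2*n)))"
      using wB_nonneg[OF assms, of B m] assms by (subst ennreal_mult) auto
  qed
  also have "\<dots> = ennreal (\<Sum>m<2*n. wB n B m * (1 / real (2*n)))"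
    using wB_nonneg[OF assms] by (subst sum_ennreal) auto
  also have "\<dots> = 1" using sum_w[OF assms, of B] assms by (simp add: sum_divide_distrib[symmetric])
  finally show "emeasure (MB n B) (space (MB n B)) = 1" .
qed

lemma MB_nondec: assumes "n > 0" shows "nondec_pdf_dist01 (MB n B)"
  unfolding nondec_pdf_dist01_def
proof (intro conjI MB_prob[OF assms] exI[of _ "fB n B"])
  show "\<forall>x. 0 \<le> fB n B x" using fB_nonneg[OF assms] by auto
  show "\<forall>x. x \<notin> {0..1} \<longrightarrow> fB n B x = 0" using fB_out[OF assms] by auto
qed (auto simp: MB_def fB_mono[OF assms])


lemma FB_at: assumes n: "n > 0" and p: "p < 2*n" and t: "0 \<le> t" "t \<le> 1 / real (2*n)"
  shows "FB n B (real p / real (2*n) + t) = (\<Sum>m<p. wB n B m / real (2*n)) + wB n B p * t"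
proof -
  define r where "r = real (2*n)"
  have r: "r > 0" using n by (simp add: r_def)
  define x where "x = real p / r + t"
  define g where "g m = wB n B m * max 0 (min (real (Suc m) / r) x - real m / r)" for m
  have FBx: "FB n B x = (\<Sum>m<2*n. g m)" unfolding FB_def g_def r_def ..
  have split: "{..<2*n} = {..<Suc p} \<union> {Suc p..<2*n}" using p by auto
  have "(\<Sum>m<2*n. g m) = (\<Sum>m<Suc p. g m) + (\<Sum>m\<in>{Suc p..<2*n}. g m)"
    unfolding split by (rule sum.union_disjoint) auto
  also have "(\<Sum>m\<in>{Suc p..<2*n}. g m) = 0"
  proof (rule sum.neutral, rule ballI)
    fix m assume "m \<in> {Suc p..<2*n}"
    then have "real (Suc p) \<le> real m" by simp
    then have "real (Suc p) / r \<le> real m / r" using r by (simp add: divide_right_mono)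
    moreover have "x \<le> real (Suc p) / r" using t r unfolding x_def r_def
      by (simp add: add_divide_distrib)
    ultimately show "g m = 0" unfolding g_def by simp
  qed
  also have "(\<Sum>m<Suc p. g m) = (\<Sum>m<p. g m) + g p" by simp
  also have "g p = wB n B p * t"
  proof -
    have "real p / r + t \<le> real (Suc p) / r" using t r unfolding r_def
      by (simp add: add_divide_distrib)
    then show ?thesis unfolding g_def x_def using t by simp
  qed
  also have "(\<Sum>m<p. g m) = (\<Sum>m<p. wB n B m / r)"
  proof (rule sum.cong[OF refl])
    fix m assume "m \<in> {..<p}"
    then have "real (Suc m) \<le> real p" by simp
    then have "real (Suc m) / r \<le> real p / r" using r by (simp add: divide_right_mono)
    then have "min (real (Suc m) / r) x = real (Suc m) / r" unfolding x_def using t by simp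
    moreover have "real (Suc m) / r - real m / r = 1 / r" by (simp add: diff_divide_distrib[symmetric])
    ultimately show "g m = wB n B m / r" unfolding g_def using r by simp
  qed
  finally show ?thesis using FBx unfolding x_def r_def by simp
qed

lemma FB_grid_diff: assumes n: "n > 0" and j: "j < n"
  shows "FB n B (real (2*j+1) / real (2*n)) - FB n C (real (2*j+1) / real (2*n))
    = ((if j \<in> B then 1 else 0) - (if j \<in> C then 1 else 0)) / real (2*n) ^ 2"
proof -
  have p: "2*j+1 < 2*n" using j by simp
  have e: "\<And>B. FB n B (real (2*j+1) / real (2*n)) = (\<Sum>m<2*j+1. wB n B m / real (2*n))"
    using FB_at[OF n p, of 0] n by simp
  have s: "\<And>B. (\<Sum>m<2*j+1. sB B m) = (if j \<in> B then 1 else 0)"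
    using sum_s by (simp add: sB_def)
  have w: "\<And>B. (\<Sum>m<2*j+1. wB n B m / real (2*n)) =
      ((\<Sum>m<2*j+1. 2 * real m + 1) + (\<Sum>m<2*j+1. sB B m)) / real (2*n) ^ 2"
    unfolding wB_def by (simp add: sum_divide_distrib[symmetric] sum.distrib power2_eq_square)
  show ?thesis unfolding e w s by (simp add: diff_divide_distrib[symmetric])
qed

lemma FB_lip: assumes n: "n > 0" and j: "j < n" and t: "0 \<le> t" "t \<le> 1 / real (2*n)"
  shows "FB n C (real (2*j+1) / real (2*n) + t) \<le> FB n C (real (2*j+1) / real (2*n)) + 2 * t"
proof -
  have p: "2*j+1 < 2*n" using j by simp
  have "FB n C (real (2*j+1) / real (2*n) + t) = FB n C (real (2*j+1) / real (2*n)) + wB n C (2*j+1) * t"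
    using FB_at[OF n p t] FB_at[OF n p, of 0] n by simp
  moreover have "wB n C (2*j+1) * t \<le> 2 * t" using wB_le2[OF n p] t by (simp add: mult_right_mono)
  ultimately show ?thesis by simp
qed


lemma levy_ge:
  assumes "0 \<le> e1" "\<forall>v. F (v - e1) - e1 \<le> G v \<and> G v \<le> F (v + e1) + e1"
    and "\<And>e. 0 \<le> e \<Longrightarrow> (\<forall>v. F (v - e) - e \<le> G v \<and> G v \<le> F (v + e) + e) \<Longrightarrow> c \<le> e"
  shows "c \<le> levy_dist F G"
  unfolding levy_dist_def
  by (rule cInf_greatest) (use assms in blast)+

lemma FB_01: assumes "n > 0" shows "0 \<le> FB n B x" "FB n B x \<le> 1"
proof -
  interpret prob_space "MB n B" by (rule MB_prob[OF assms])
  show "0 \<le> FB n B x" using FB_nonneg[OF assms] .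
  show "FB n B x \<le> 1" using cdf_MB[OF assms, of B] prob_le_1[of "{..x}"]
    by (metis cdf_def2)
qed

lemma levy_FB: assumes n: "n > 0" and j: "j < n" and jB: "j \<in> B" and jC: "j \<notin> C"
  shows "1 / (3 * real (2*n) ^ 2) \<le> levy_dist (FB n B) (FB n C)"
        "1 / (3 * real (2*n) ^ 2) \<le> levy_dist (FB n C) (FB n B)"
proof -
  define r where "r = real (2*n)"
  have r: "r \<ge> 2" using n by (simp add: r_def)
  define x where "x = real (2*j+1) / r"
  define h where "h = 1 / r^2"
  have d: "FB n B x = FB n C x + h"
    using FB_grid_diff[OF n j, of B C] jB jC unfolding x_def h_def r_def by simp
  have hr: "h / 3 \<le> 1 / r" using r unfolding h_def by (simp add: divide_simps power2_eq_square)
  have key: "h / 3 \<le> e" if e: "0 \<le> e" "FB n B x \<le> FB n C (x + e) + e" for e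
  proof (rule ccontr)
    assume "\<not> h / 3 \<le> e"
    then have "e \<le> 1 / r" using hr by simp
    then have "FB n C (x + e) \<le> FB n C x + 2 * e" using FB_lip[OF n j e(1)] unfolding x_def r_def by simp
    then show False using e d \<open>\<not> h / 3 \<le> e\<close> by simp
  qed
  have eq: "1 / (3 * real (2*n) ^ 2) = h / 3" unfolding h_def r_def by simp
  have b1: "\<forall>v. F (v - 1) - 1 \<le> G v \<and> G v \<le> F (v + 1) + 1" if "F = FB n B \<or> F = FB n C" "G = FB n B \<or> G = FB n C" for F G
    using that FB_01[OF n] by (smt (verit))
  show "1 / (3 * real (2*n) ^ 2) \<le> levy_dist (FB n B) (FB n C)"
    unfolding eq
  proof (rule levy_ge[of 1])
    fix e assume "0 \<le> e" "\<forall>v. FB n B (v - e) - e \<le> FB n C v \<and> FB n C v \<le> FB n B (v + e) + e"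
    then have "FB n B (x + e - e) - e \<le> FB n C (x + e)" by blast
    then show "h / 3 \<le> e" using key[OF \<open>0 \<le> e\<close>] by simp
  qed (use b1 in auto)
  show "1 / (3 * real (2*n) ^ 2) \<le> levy_dist (FB n C) (FB n B)"
    unfolding eq
  proof (rule levy_ge[of 1])
    fix e assume "0 \<le> e" "\<forall>v. FB n C (v - e) - e \<le> FB n B v \<and> FB n B v \<le> FB n C (v + e) + e"
    then have "FB n B x \<le> FB n C (x + e) + e" by blast
    then show "h / 3 \<le> e" using key[OF \<open>0 \<le> e\<close>] by simp
  qed (use b1 in auto)
qed


lemma levy_distinct: assumes n: "n > 0" and BC: "B \<subseteq> {..<n}" "C \<subseteq> {..<n}" "B \<noteq> C"
  shows "1 / (3 * real (2*n) ^ 2) \<le> levy_dist (FB n B) (FB n C)"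
proof -
  obtain j where "(j \<in> B \<and> j \<notin> C) \<or> (j \<in> C \<and> j \<notin> B)" using BC(3) by blast
  then show ?thesis
  proof
    assume "j \<in> B \<and> j \<notin> C"
    then show ?thesis using levy_FB(1)[OF n, of j B C] BC by auto
  next
    assume "j \<in> C \<and> j \<notin> B"
    then show ?thesis using levy_FB(2)[OF n, of j C B] BC by auto
  qed
qed

lemma MB_inj: assumes n: "n > 0" shows "inj_on (MB n) (Pow {..<n})"
proof (rule inj_onI, rule ccontr)
  fix B C assume B: "B \<in> Pow {..<n}" and C: "C \<in> Pow {..<n}" and eq: "MB n B = MB n C" and ne: "B \<noteq> C"
  have "FB n B = FB n C" using cdf_MB[OF n, of B] cdf_MB[OF n, of C] eq by simp
  moreover have "levy_dist (FB n B) (FB n C) = levy_dist (FB n C) (FB n C)" using calculation by simp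
  moreover have "levy_dist (FB n C) (FB n C) \<le> 0"
    unfolding levy_dist_def
    by (rule cInf_lower) (auto intro!: bdd_belowI[of _ 0])
  moreover have "0 < 1 / (3 * real (2*n) ^ 2)" using n by simp
  moreover have "1 / (3 * real (2*n) ^ 2) \<le> levy_dist (FB n B) (FB n C)"
    using levy_distinct[OF n _ _ ne] B C by auto
  ultimately show False by linarith
qed

lemma main5: "\<forall>\<epsilon>::real. 0 < \<epsilon> \<and> \<epsilon> < 1/4 \<longrightarrow>
     (\<exists>S :: real measure set. finite S \<and>
        real (card S) \<ge> 2 powr (1/2 * \<epsilon> powr (-1/2)) \<and>
        (\<forall>M\<in>S. nondec_pdf_dist01 M) \<and>
        (\<forall>M\<in>S. \<forall>N\<in>S. M \<noteq> N \<longrightarrow> levy_dist (cdf M) (cdf N) \<ge> 1/12 * \<epsilon>))"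
proof (intro allI impI)
  fix \<epsilon> :: real assume e: "0 < \<epsilon> \<and> \<epsilon> < 1/4"
  define s where "s = \<epsilon> powr (-1/2)"
  have s0: "s > 0" using e by (simp add: s_def)
  have s2: "s^2 = 1 / \<epsilon>"
  proof -
    have "s^2 = \<epsilon> powr (-1/2) * \<epsilon> powr (-1/2)" unfolding s_def by (rule power2_eq_square)
    also have "\<dots> = \<epsilon> powr (-1/2 + -1/2)" by (rule powr_add[symmetric])
    also have "(-1/2 + -1/2 :: real) = -1" by simp
    also have "\<epsilon> powr -1 = 1 / \<epsilon>" using e by (intro powr_neg_one) simp
    finally show ?thesis .
  qed
  have s_ge: "s \<ge> 2"
  proof (rule ccontr)
    assume "\<not> s \<ge> 2"
    then have "s^2 < 2^2" using s0 by (intro power_strict_mono) auto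
    then have "1 / \<epsilon> < 4" using s2 by simp
    then show False using e by (simp add: divide_simps)
  qed
  define n where "n = nat \<lfloor>s\<rfloor>"
  have rn: "real n = of_int \<lfloor>s\<rfloor>" using s0 by (simp add: n_def)
  have n1: "real n \<le> s" "s - 1 < real n" unfolding rn by (rule of_int_floor_le) (rule real_of_int_floor_gt_diff_one)
  have n0: "n > 0" using n1 s_ge by linarith
  define S where "S = MB n ` Pow {..<n}"
  show "\<exists>S :: real measure set. finite S \<and>
        real (card S) \<ge> 2 powr (1/2 * \<epsilon> powr (-1/2)) \<and>
        (\<forall>M\<in>S. nondec_pdf_dist01 M) \<and>
        (\<forall>M\<in>S. \<forall>N\<in>S. M \<noteq> N \<longrightarrow> levy_dist (cdf M) (cdf N) \<ge> 1/12 * \<epsilon>)"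
  proof (intro exI[of _ S] conjI)
    show "finite S" unfolding S_def by simp
    have "card S = card (Pow {..<n::nat})" unfolding S_def by (rule card_image[OF MB_inj[OF n0]])
    also have "\<dots> = 2 ^ n" by (simp add: card_Pow)
    finally have cS: "real (card S) = 2 powr real n" by (simp add: powr_realpow)
    have "2 powr (1/2 * s) \<le> 2 powr real n" by (rule powr_mono) (use n1 s_ge in auto)
    then show "real (card S) \<ge> 2 powr (1/2 * \<epsilon> powr (-1/2))"
      unfolding cS s_def .
    show "\<forall>M\<in>S. nondec_pdf_dist01 M" unfolding S_def using MB_nondec[OF n0] by auto
    have bnd: "1/12 * \<epsilon> \<le> 1 / (3 * real (2*n) ^ 2)"
    proof -
      have "real n ^ 2 \<le> s ^ 2" by (rule power_mono) (use n1 in auto)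
      then have "real n ^ 2 \<le> 1 / \<epsilon>" unfolding s2 .
      then have a: "real n ^ 2 * \<epsilon> \<le> 1" using e by (simp add: le_divide_eq)
      have eq: "1 / (3 * real (2*n) ^ 2) = 1 / (12 * real n ^ 2)" by (simp add: power2_eq_square)
      have pos: "0 < 12 * real n ^ 2" using n0 by simp
      show ?thesis unfolding eq pos_le_divide_eq[OF pos] using a by (simp add: algebra_simps)
    qed
    show "\<forall>M\<in>S. \<forall>N\<in>S. M \<noteq> N \<longrightarrow> levy_dist (cdf M) (cdf N) \<ge> 1/12 * \<epsilon>"
    proof (intro ballI impI)
      fix M N assume "M \<in> S" "N \<in> S" "M \<noteq> N"
      then obtain B C where BC: "B \<subseteq> {..<n}" "C \<subseteq> {..<n}" "M = MB n B" "N = MB n C" "B \<noteq> C"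
        unfolding S_def by auto
      have "1 / (3 * real (2*n) ^ 2) \<le> levy_dist (FB n B) (FB n C)"
        by (rule levy_distinct[OF n0 BC(1,2,5)])
      moreover have "cdf M = FB n B" "cdf N = FB n C" using BC cdf_MB[OF n0] by auto
      ultimately show "levy_dist (cdf M) (cdf N) \<ge> 1/12 * \<epsilon>" using bnd by simp
    qed
  qed
qed


theorem theorem5:
  shows "\<exists>c1 > 0. \<exists>c2 > 0. \<exists>\<epsilon>0 > 0. \<forall>\<epsilon>::real. 0 < \<epsilon> \<and> \<epsilon> < \<epsilon>0 \<longrightarrow>
     (\<exists>S :: real measure set. finite S \<and>
        real (card S) \<ge> 2 powr (c1 * \<epsilon> powr (-1/2)) \<and>
        (\<forall>M\<in>S. nondec_pdf_dist01 M) \<and>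
        (\<forall>M\<in>S. \<forall>N\<in>S. M \<noteq> N \<longrightarrow> levy_dist (cdf M) (cdf N) \<ge> c2 * \<epsilon>))"
  apply (rule exI[of _ "1/2"], rule conjI, simp)
  apply (rule exI[of _ "1/12"], rule conjI, simp)
  apply (rule exI[of _ "1/4"], rule conjI, simp)
  apply (rule main5)
  done

end
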